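(* Let $f:\mathbb{R}^d\to\mathbb{R}$ be differentiable with $L$-Lipschitz gradient and $c$-strongly convex, with minimizer $\vec x^*$. Consider single-step SGD iterations (as defined in the context) with constant learning rate $\alpha\le\frac{1}{3L}$ satisfying elastic consistency with constant $B$. Then for every $t\ge0$, $$\mathbb{E}\|\vec x_{t+1}-\vec x^*\|^2\le\Big(1-\frac{\alpha c}{2}\Big)\mathbb{E}\|\vec x_t-\vec x^*\|^2+\frac{2\alpha^3B^2L^2}{c}+3\alpha^2\sigma^2+3\alpha^4L^2B^2.$$
   Context: $c$-strong convexity ($c>0$) means $(\vec x-\vec y)^\top(\nabla f(\vec x)-\nabla f(\vec y))\ge c\|\vec x-\vec y\|^2$ for all $\vec x,\vec y$. All random objects live on a probability space with a filtration $(\mathcal F_t)_{t\ge0}$. Single-step SGD iterations: $\vec x_0\in\mathbb{R}^d$ is deterministic. At each iteration $t\ge0$ some processor $i=i_t$ (chosen independently of the algorithm's randomness) holds a view $\vec v_t^{i}$. The vectors $\vec x_t,\vec v_t^{i}$ are $\mathcal F_t$-measurable, and the processor computes an $\mathcal F_{t+1}$-measurable stochastic gradient $\tilde G(\vec v_t^{i})$ with $\mathbb{E}[\tilde G(\vec v_t^{i})\mid\mathcal F_t]=\nabla f(\vec v_t^{i})$ and $\mathbb{E}[\|\tilde G(\vec v_t^{i})-\nabla f(\vec v_t^{i})\|^2\mid\mathcal F_t]\le\sigma^2$. Update: $\vec x_{t+1}=\vec x_t-\alpha\tilde G(\vec v_t^{i})$. Elastic consistency with constant $B>0$: $\mathbb{E}\|\vec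 x_t-\vec v_t^{i}\|^2\le\alpha^2B^2$ for every $t$ and the processor $i$ acting at $t$. *)

theory Defs
  imports "HOL-Probability.Probability"
begin

end

theory Submission imports Defs begin

lemma mvt_line:
  fixes f :: "real^'n \<Rightarrow> real" and f' :: "real^'n \<Rightarrow> real^'n"
  assumes grad: "\<And>y. (f has_derivative (\<lambda>h. f' y \<bullet> h)) (at y)"
  shows "\<exists>s\<in>{0..1}. f z - f x = f' (x + s *\<^sub>R (z - x)) \<bullet> (z - x)"
proof -
  define h where "h s = f (x + s *\<^sub>R (z - x))" for s :: real
  have d: "(h has_derivative (\<lambda>ds. ds * (f' (x + s *\<^sub>R (z - x)) \<bullet> (z - x)))) (at s within {0..1})" for s
  proof -
    have l: "((\<lambda>s. x + s *\<^sub>R (z - x)) has_derivative (\<lambda>ds. ds *\<^sub>R (z - x))) (at s within {0..1})"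
      by (auto intro!: derivative_eq_intros)
    have "(h has_derivative ((\<lambda>hh. f' (x + s *\<^sub>R (z - x)) \<bullet> hh) \<circ> (\<lambda>ds. ds *\<^sub>R (z - x)))) (at s within {0..1})"
      unfolding h_def using has_derivative_in_compose[OF l has_derivative_subset[OF grad]]
      by (simp add: o_def)
    then show ?thesis by (simp add: o_def algebra_simps)
  qed
  obtain s where s: "s \<in> {0..1}" "h 1 - h 0 = (1 - 0) * (f' (x + s *\<^sub>R (z - x)) \<bullet> (z - x))"
    using mvt_very_simple[of 0 1 h, OF _ d] by auto
  then show ?thesis unfolding h_def by auto
qed

lemma lower_bd:
  fixes f :: "real^'n \<Rightarrow> real" and f' :: "real^'n \<Rightarrow> real^'n"
  assumes grad: "\<And>y. (f has_derivative (\<lambda>h. f' y \<bullet> h)) (at y)"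
    and mono: "\<And>y z. (y - z) \<bullet> (f' y - f' z) \<ge> 0"
  shows "f z - f x \<ge> f' x \<bullet> (z - x)"
proof -
  obtain s where s: "s \<in> {0..1}" "f z - f x = f' (x + s *\<^sub>R (z - x)) \<bullet> (z - x)"
    using mvt_line[OF grad] by blast
  have m: "(s *\<^sub>R (z - x)) \<bullet> (f' (x + s *\<^sub>R (z - x)) - f' x) \<ge> 0"
    using mono[of "x + s *\<^sub>R (z - x)" x] by simp
  show ?thesis
  proof (cases "s = 0")
    case True then show ?thesis using s by simp
  next
    case False
    then have "s > 0" using s by auto
    with m have "(z - x) \<bullet> (f' (x + s *\<^sub>R (z - x)) - f' x) \<ge> 0"
      by (simp add: zero_le_mult_iff)
    then show ?thesis using s by (simp add: inner_diff_right inner_commute)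
  qed
qed

lemma upper_bd:
  fixes f :: "real^'n \<Rightarrow> real" and f' :: "real^'n \<Rightarrow> real^'n"
  assumes grad: "\<And>y. (f has_derivative (\<lambda>h. f' y \<bullet> h)) (at y)"
    and lip: "L-lipschitz_on UNIV f'"
  shows "f z - f x \<le> f' x \<bullet> (z - x) + L * (norm (z - x))\<^sup>2"
proof -
  obtain s where s: "s \<in> {0..1}" "f z - f x = f' (x + s *\<^sub>R (z - x)) \<bullet> (z - x)"
    using mvt_line[OF grad] by blast
  have L0: "L \<ge> 0" using lip lipschitz_on_nonneg by blast
  have "(f' (x + s *\<^sub>R (z - x)) - f' x) \<bullet> (z - x) \<le> norm (f' (x + s *\<^sub>R (z - x)) - f' x) * norm (z - x)"
    by (rule norm_cauchy_schwarz)
  also have "\<dots> \<le> (L * norm (s *\<^sub>R (z - x))) * norm (z - x)"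
    apply (rule mult_right_mono)
    using lipschitz_onD[OF lip, of "x + s *\<^sub>R (z - x)" x] by (auto simp: dist_norm)
  also have "\<dots> \<le> L * (norm (z - x))\<^sup>2"
  proof -
    have "L * (s * norm (z - x)) * norm (z - x) = s * (L * (norm (z - x))\<^sup>2)"
      by (simp add: power2_eq_square)
    also have "\<dots> \<le> 1 * (L * (norm (z - x))\<^sup>2)"
      using s(1) L0 by (intro mult_right_mono) auto
    finally show ?thesis using s(1) by simp
  qed
  finally show ?thesis using s by (simp add: inner_diff_left)
qed

lemma half_cocoer:
  fixes f :: "real^'n \<Rightarrow> real" and f' :: "real^'n \<Rightarrow> real^'n"
  assumes grad: "\<And>y. (f has_derivative (\<lambda>h. f' y \<bullet> h)) (at y)"
    and lip: "L-lipschitz_on UNIV f'" and L: "L > 0"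
    and mono: "\<And>y z. (y - z) \<bullet> (f' y - f' z) \<ge> 0"
  shows "f y - f x - f' x \<bullet> (y - x) \<ge> (norm (f' y - f' x))\<^sup>2 / (4 * L)"
proof -
  define g where "g = f' y - f' x"
  define w where "w = y - (1 / (2 * L)) *\<^sub>R g"
  have a: "f w - f x \<ge> f' x \<bullet> (w - x)" by (rule lower_bd[OF grad mono])
  have b: "f w - f y \<le> f' y \<bullet> (w - y) + L * (norm (w - y))\<^sup>2" by (rule upper_bd[OF grad lip])
  have n: "L * (norm (w - y))\<^sup>2 = (norm g)\<^sup>2 / (4 * L)"
    using L by (simp add: w_def power2_eq_square field_simps)
  have i1: "f' y \<bullet> (w - y) = - (f' y \<bullet> g) / (2 * L)" by (simp add: w_def inner_diff_right)
  have i2: "f' x \<bullet> (w - x) = f' x \<bullet> (y - x) - (f' x \<bullet> g) / (2 * L)"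
    by (simp add: w_def inner_diff_right algebra_simps)
  have gg: "(f' y \<bullet> g) - (f' x \<bullet> g) = (norm g)\<^sup>2"
    by (simp add: g_def inner_diff_left[symmetric] power2_norm_eq_inner)
  have "f y - f x - f' x \<bullet> (y - x) \<ge> ((f' y \<bullet> g) - (f' x \<bullet> g)) / (2 * L) - (norm g)\<^sup>2 / (4 * L)"
    using a b n i1 i2 by (simp add: diff_divide_distrib)
  also have "((f' y \<bullet> g) - (f' x \<bullet> g)) / (2 * L) - (norm g)\<^sup>2 / (4 * L) = (norm g)\<^sup>2 / (4 * L)"
    using L by (simp add: gg field_simps)
  finally show ?thesis by (simp add: g_def)
qed

lemma cocoer:
  fixes f :: "real^'n \<Rightarrow> real" and f' :: "real^'n \<Rightarrow> real^'n"
  assumes grad: "\<And>y. (f has_derivative (\<lambda>h. f' y \<bullet> h)) (at y)"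
    and lip: "L-lipschitz_on UNIV f'" and L: "L > 0"
    and mono: "\<And>y z. (y - z) \<bullet> (f' y - f' z) \<ge> 0"
  shows "(norm (f' y - f' x))\<^sup>2 \<le> 2 * L * ((y - x) \<bullet> (f' y - f' x))"
proof -
  have a: "f y - f x - f' x \<bullet> (y - x) \<ge> (norm (f' y - f' x))\<^sup>2 / (4 * L)"
    by (rule half_cocoer[OF grad lip L mono])
  have b: "f x - f y - f' y \<bullet> (x - y) \<ge> (norm (f' x - f' y))\<^sup>2 / (4 * L)"
    by (rule half_cocoer[OF grad lip L mono])
  have nc: "norm (f' x - f' y) = norm (f' y - f' x)" by (rule norm_minus_commute)
  have e: "(y - x) \<bullet> (f' y - f' x) = (f y - f x - f' x \<bullet> (y - x)) + (f x - f y - f' y \<bullet> (x - y))"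
    by (simp add: inner_diff_left inner_diff_right inner_commute algebra_simps)
  have "(norm (f' y - f' x))\<^sup>2 / (2 * L) \<le> (y - x) \<bullet> (f' y - f' x)"
    using a b nc e by (simp add: field_simps)
  then show ?thesis using L by (simp add: field_simps)
qed

lemma grad_zero:
  fixes f :: "real^'n \<Rightarrow> real" and f' :: "real^'n \<Rightarrow> real^'n"
  assumes grad: "\<And>y. (f has_derivative (\<lambda>h. f' y \<bullet> h)) (at y)"
    and lip: "L-lipschitz_on UNIV f'" and L: "L > 0"
    and minimizer: "\<And>y. f xstar \<le> f y"
  shows "f' xstar = 0"
proof -
  define g where "g = f' xstar"
  define z where "z = xstar - (1 / (2 * L)) *\<^sub>R g"
  have b: "f z - f xstar \<le> f' xstar \<bullet> (z - xstar) + L * (norm (z - xstar))\<^sup>2"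
    by (rule upper_bd[OF grad lip])
  have n: "L * (norm (z - xstar))\<^sup>2 = (norm g)\<^sup>2 / (4 * L)"
    using L by (simp add: z_def power2_eq_square field_simps)
  have i: "f' xstar \<bullet> (z - xstar) = - (norm g)\<^sup>2 / (2 * L)"
    by (simp add: z_def g_def power2_norm_eq_inner)
  have "0 \<le> f z - f xstar" using minimizer[of z] by simp
  then have "0 \<le> - (norm g)\<^sup>2 / (2 * L) + (norm g)\<^sup>2 / (4 * L)" using b n i by simp
  then have "(norm g)\<^sup>2 \<le> 0" using L by (simp add: field_simps)
  then show ?thesis by (simp add: g_def)
qed

lemma c_le_L:
  fixes f' :: "real^'n \<Rightarrow> real^'n"
  assumes lip: "L-lipschitz_on UNIV f'"
    and strong: "\<And>y z. (y - z) \<bullet> (f' y - f' z) \<ge> c * (norm (y - z))\<^sup>2"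
  shows "c \<le> L"
proof -
  obtain i :: 'n where True by simp
  define e :: "real^'n" where "e = axis i 1"
  have ne: "norm e = 1" by (simp add: e_def)
  have "c * (norm (e - 0))\<^sup>2 \<le> (e - 0) \<bullet> (f' e - f' 0)" by (rule strong)
  also have "\<dots> \<le> norm (e - 0) * norm (f' e - f' 0)" by (rule norm_cauchy_schwarz)
  also have "\<dots> \<le> 1 * (L * norm (e - 0))"
    using lipschitz_onD[OF lip, of e 0] ne by (simp add: dist_norm)
  finally show ?thesis using ne by simp
qed

lemma real_step:
  fixes na d p L c \<alpha> :: real
  assumes "\<alpha> > 0" "c > 0" "L > 0" "\<alpha> * L \<le> 1/3" "p \<ge> c * na\<^sup>2" "na \<ge> 0" "d \<ge> 0"
  shows "na\<^sup>2 - 2 * \<alpha> * (p - L * na * d) + \<alpha>\<^sup>2 * (3 * L * p + 3 * L\<^sup>2 * d\<^sup>2)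
     \<le> (1 - \<alpha> * c / 2) * na\<^sup>2 + (2 * \<alpha> * L\<^sup>2 / c + 3 * \<alpha>\<^sup>2 * L\<^sup>2) * d\<^sup>2"
proof -
  have p0: "p \<ge> 0" using assms by (meson order_trans mult_nonneg_nonneg zero_le_power2 less_imp_le)
  have 1: "\<alpha>\<^sup>2 * (3 * L * p) \<le> \<alpha> * p"
  proof -
    have "\<alpha>\<^sup>2 * (3 * L * p) = (3 * (\<alpha> * L)) * (\<alpha> * p)" by (simp add: power2_eq_square)
    also have "\<dots> \<le> 1 * (\<alpha> * p)" using assms p0 by (intro mult_right_mono) auto
    finally show ?thesis by simp
  qed
  have 2: "2 * L * na * d \<le> c / 2 * na\<^sup>2 + 2 * L\<^sup>2 / c * d\<^sup>2"
  proof -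
    have "0 \<le> (c * na - 2 * L * d)\<^sup>2 / (2 * c)" using assms by simp
    also have "(c * na - 2 * L * d)\<^sup>2 / (2 * c) = c / 2 * na\<^sup>2 + 2 * L\<^sup>2 / c * d\<^sup>2 - 2 * L * na * d"
      using assms by (simp add: power2_eq_square field_simps)
    finally show ?thesis by simp
  qed
  have 3: "2 * \<alpha> * L * na * d \<le> \<alpha> * (c / 2 * na\<^sup>2 + 2 * L\<^sup>2 / c * d\<^sup>2)"
    using mult_left_mono[OF 2, of \<alpha>] assms by (simp add: mult.assoc)
  have 4: "\<alpha> * p \<ge> \<alpha> * (c * na\<^sup>2)" using assms by (intro mult_left_mono) auto
  show ?thesis using 1 3 4 by (simp add: algebra_simps)
qed

lemma pointwise:
  fixes f :: "real^'n \<Rightarrow> real" and f' :: "real^'n \<Rightarrow> real^'n"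
  assumes grad: "\<And>y. (f has_derivative (\<lambda>h. f' y \<bullet> h)) (at y)"
    and lip: "L-lipschitz_on UNIV f'" and L: "L > 0" and c: "c > 0"
    and strong: "\<And>y z. (y - z) \<bullet> (f' y - f' z) \<ge> c * (norm (y - z))\<^sup>2"
    and z: "f' xstar = 0" and al: "\<alpha> > 0" "\<alpha> * L \<le> 1/3"
  shows "(norm (A - xstar - \<alpha> *\<^sub>R f' V))\<^sup>2 \<le> (1 - \<alpha> * c / 2) * (norm (A - xstar))\<^sup>2
     + (2 * \<alpha> * L\<^sup>2 / c + 3 * \<alpha>\<^sup>2 * L\<^sup>2) * (norm (A - V))\<^sup>2"
proof -
  have mono: "\<And>y z. (y - z) \<bullet> (f' y - f' z) \<ge> 0"
    using strong c by (meson order_trans mult_nonneg_nonneg zero_le_power2 less_imp_le)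
  define a where "a = A - xstar"
  define h where "h = f' A"
  define e where "e = f' V - h"
  define p where "p = a \<bullet> h"
  have pc: "p \<ge> c * (norm a)\<^sup>2" using strong[of A xstar] z by (simp add: p_def a_def h_def)
  have hp: "(norm h)\<^sup>2 \<le> 2 * L * p" using cocoer[OF grad lip L mono, of A xstar] z
    by (simp add: p_def a_def h_def)
  have ne: "norm e \<le> L * norm (A - V)"
    using lipschitz_onD[OF lip, of V A] by (simp add: e_def h_def dist_norm norm_minus_commute)
  have ag: "a \<bullet> f' V \<ge> p - L * norm a * norm (A - V)"
  proof -
    have "a \<bullet> f' V = p + a \<bullet> e" by (simp add: p_def e_def inner_diff_right)
    moreover have "a \<bullet> e \<ge> - (norm a * norm e)"
      using norm_cauchy_schwarz[of "-a" e] by simp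
    moreover have "norm a * norm e \<le> norm a * (L * norm (A - V))"
      using ne by (intro mult_left_mono) auto
    ultimately show ?thesis by (simp add: algebra_simps)
  qed
  have gg: "(norm (f' V))\<^sup>2 \<le> 3 * L * p + 3 * L\<^sup>2 * (norm (A - V))\<^sup>2"
  proof -
    have fv: "f' V = h + e" by (simp add: e_def)
    have "0 \<le> 2 * (norm ((1/2) *\<^sub>R h - e))\<^sup>2" by simp
    also have "2 * (norm ((1/2) *\<^sub>R h - e))\<^sup>2 = (1/2) * (norm h)\<^sup>2 - 2 * (h \<bullet> e) + 2 * (norm e)\<^sup>2"
      by (simp add: power2_norm_eq_inner inner_diff_left inner_diff_right inner_commute algebra_simps)
    finally have he: "2 * (h \<bullet> e) \<le> (1/2) * (norm h)\<^sup>2 + 2 * (norm e)\<^sup>2" by simp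
    have "(norm (f' V))\<^sup>2 = (norm h)\<^sup>2 + 2 * (h \<bullet> e) + (norm e)\<^sup>2"
      unfolding fv by (simp add: power2_norm_eq_inner inner_add_left inner_add_right inner_commute)
    also have "\<dots> \<le> 3/2 * (norm h)\<^sup>2 + 3 * (norm e)\<^sup>2" using he by simp
    also have "(norm e)\<^sup>2 \<le> (L * norm (A - V))\<^sup>2" using ne by (intro power_mono) auto
    then have "3/2 * (norm h)\<^sup>2 + 3 * (norm e)\<^sup>2 \<le> 3/2 * (2 * L * p) + 3 * (L * norm (A - V))\<^sup>2"
      using hp by simp
    finally show ?thesis by (simp add: power_mult_distrib)
  qed
  have exp: "(norm (a - \<alpha> *\<^sub>R f' V))\<^sup>2 = (norm a)\<^sup>2 - 2 * \<alpha> * (a \<bullet> f' V) + \<alpha>\<^sup>2 * (norm (f' V))\<^sup>2"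
    by (simp only: power2_norm_eq_inner) (simp add: inner_diff_left inner_diff_right inner_commute power2_eq_square algebra_simps)
  have "(norm (a - \<alpha> *\<^sub>R f' V))\<^sup>2 \<le> (norm a)\<^sup>2 - 2 * \<alpha> * (p - L * norm a * norm (A - V))
        + \<alpha>\<^sup>2 * (3 * L * p + 3 * L\<^sup>2 * (norm (A - V))\<^sup>2)"
    unfolding exp using ag gg al
    by (intro add_mono diff_mono mult_left_mono) auto
  also have "\<dots> \<le> (1 - \<alpha> * c / 2) * (norm a)\<^sup>2 + (2 * \<alpha> * L\<^sup>2 / c + 3 * \<alpha>\<^sup>2 * L\<^sup>2) * (norm (A - V))\<^sup>2"
    by (rule real_step) (use al c L pc in auto)
  finally show ?thesis by (simp add: a_def)
qed

lemma abs_inner_basis_le: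
  fixes x y :: "'a::euclidean_space"
  assumes "b \<in> Basis"
  shows "\<bar>(x \<bullet> b) * (y \<bullet> b)\<bar> \<le> (norm x)\<^sup>2 + (norm y)\<^sup>2"
proof -
  have "\<bar>(x \<bullet> b) * (y \<bullet> b)\<bar> \<le> norm x * norm y"
    unfolding abs_mult using Basis_le_norm[OF assms] by (intro mult_mono) auto
  also have "\<dots> \<le> (norm x)\<^sup>2 + (norm y)\<^sup>2"
  proof -
    have "2 * (norm x * norm y) \<le> (norm x)\<^sup>2 + (norm y)\<^sup>2"
      using sum_squares_bound[of "norm x" "norm y"] by (simp add: mult.assoc)
    moreover have "0 \<le> norm x * norm y" by simp
    ultimately show ?thesis by linarith
  qed
  finally show ?thesis .
qed

lemma abs_inner_le2:
  fixes x y :: "'a::real_inner"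
  shows "\<bar>x \<bullet> y\<bar> \<le> (norm x)\<^sup>2 + (norm y)\<^sup>2"
proof -
  have "\<bar>x \<bullet> y\<bar> \<le> norm x * norm y" by (rule Cauchy_Schwarz_ineq2)
  also have "\<dots> \<le> (norm x)\<^sup>2 + (norm y)\<^sup>2"
  proof -
    have "2 * (norm x * norm y) \<le> (norm x)\<^sup>2 + (norm y)\<^sup>2"
      using sum_squares_bound[of "norm x" "norm y"] by (simp add: mult.assoc)
    moreover have "0 \<le> norm x * norm y" by simp
    ultimately show ?thesis by linarith
  qed
  finally show ?thesis .
qed

theorem mainTheorem6:
  fixes M :: "'a measure" and F :: "nat \<Rightarrow> 'a measure"
    and f :: "real^'n \<Rightarrow> real" and f' :: "real^'n \<Rightarrow> real^'n"
    and L c \<alpha> B \<sigma> :: real and xstar x0 :: "real^'n"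
    and x v G :: "nat \<Rightarrow> 'a \<Rightarrow> real^'n" and t :: nat
  assumes prob: "prob_space M"
    and filt_sub: "\<And>s. sigma_finite_subalgebra M (F s)"
    and filt_mono: "\<And>s. sets (F s) \<subseteq> sets (F (Suc s))"
    and grad: "\<And>y. (f has_derivative (\<lambda>h. f' y \<bullet> h)) (at y)"
    and lip: "L-lipschitz_on UNIV f'"
    and c_pos: "c > 0"
    and strong: "\<And>y z. (y - z) \<bullet> (f' y - f' z) \<ge> c * (norm (y - z))\<^sup>2"
    and minimizer: "\<And>y. f xstar \<le> f y"
    and alpha_pos: "\<alpha> > 0" and alpha_le: "\<alpha> \<le> 1 / (3 * L)"
    and B_pos: "B > 0"
    and x0: "x 0 = (\<lambda>_. x0)"
    and x_meas: "\<And>s. x s \<in> borel_measurable (F s)"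
    and v_meas: "\<And>s. v s \<in> borel_measurable (F s)"
    and G_meas: "\<And>s. G s \<in> borel_measurable (F (Suc s))"
    and G_int: "\<And>s. integrable M (G s)"
    and unbiased: "\<And>s b. b \<in> Basis \<Longrightarrow>
        AE \<omega> in M. real_cond_exp M (F s) (\<lambda>\<omega>. G s \<omega> \<bullet> b) \<omega> = f' (v s \<omega>) \<bullet> b"
    and variance: "\<And>s. AE \<omega> in M.
        nn_cond_exp M (F s) (\<lambda>\<omega>. ennreal ((norm (G s \<omega> - f' (v s \<omega>)))\<^sup>2)) \<omega> \<le> ennreal (\<sigma>\<^sup>2)"
    and update: "\<And>s \<omega>. \<omega> \<in> space M \<Longrightarrow> x (Suc s) \<omega> = x s \<omega> - \<alpha> *\<^sub>R G s \<omega>"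
    and elastic: "\<And>s. (\<integral>\<^sup>+ \<omega>. ennreal ((norm (x s \<omega> - v s \<omega>))\<^sup>2) \<partial>M) \<le> ennreal (\<alpha>\<^sup>2 * B\<^sup>2)"
  shows "(\<integral>\<^sup>+ \<omega>. ennreal ((norm (x (Suc t) \<omega> - xstar))\<^sup>2) \<partial>M)
     \<le> ennreal (1 - \<alpha> * c / 2) * (\<integral>\<^sup>+ \<omega>. ennreal ((norm (x t \<omega> - xstar))\<^sup>2) \<partial>M)
       + ennreal (2 * \<alpha>^3 * B\<^sup>2 * L\<^sup>2 / c + 3 * \<alpha>\<^sup>2 * \<sigma>\<^sup>2 + 3 * \<alpha>^4 * L\<^sup>2 * B\<^sup>2)"
proof -
  interpret prob_space M by (rule prob)
  interpret S: sigma_finite_subalgebra M "F t" by (rule filt_sub)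
  have subt: "subalgebra M (F t)" by (rule S.subalg)
  have subs: "subalgebra M (F (Suc t))" using filt_sub[of "Suc t"] sigma_finite_subalgebra.subalg by blast
  have L: "L > 0"
  proof (rule ccontr)
    assume "\<not> L > 0"
    then have "3 * L \<le> 0" by simp
    then have "1 / (3 * L) \<le> 0" by (metis divide_nonneg_nonpos zero_le_one)
    then show False using alpha_pos alpha_le by linarith
  qed
  have aL: "\<alpha> * L \<le> 1/3" using alpha_le L by (simp add: field_simps)
  have cL: "c \<le> L" by (rule c_le_L[OF lip strong])
  have coef_pos: "1 - \<alpha> * c / 2 > 0"
  proof -
    have "\<alpha> * c \<le> \<alpha> * L" using cL alpha_pos by (intro mult_left_mono) auto
    then show ?thesis using aL by simp
  qed
  have z: "f' xstar = 0" by (rule grad_zero[OF grad lip L minimizer])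
  have f'meas[measurable]: "f' \<in> borel_measurable borel"
    by (rule borel_measurable_continuous_onI, rule lipschitz_on_continuous_on[OF lip])
  have xm[measurable]: "x t \<in> borel_measurable M" using measurable_from_subalg[OF subt x_meas] .
  have xm1[measurable]: "x (Suc t) \<in> borel_measurable M" using measurable_from_subalg[OF subs x_meas] .
  have vm[measurable]: "v t \<in> borel_measurable M" using measurable_from_subalg[OF subt v_meas] .
  have Gm[measurable]: "G t \<in> borel_measurable M" using measurable_from_subalg[OF subs G_meas] .
  define K where "K = 2 * \<alpha> * L\<^sup>2 / c + 3 * \<alpha>\<^sup>2 * L\<^sup>2"
  define u where "u \<omega> = x t \<omega> - xstar - \<alpha> *\<^sub>R f' (v t \<omega>)" for \<omega>
  define n where "n \<omega> = G t \<omega> - f' (v t \<omega>)" for \<omega>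
  have um[measurable]: "u \<in> borel_measurable M" unfolding u_def by measurable
  have nm[measurable]: "n \<in> borel_measurable M" unfolding n_def by measurable
  define D where "D = (\<integral>\<^sup>+ \<omega>. ennreal ((norm (x t \<omega> - xstar))\<^sup>2) \<partial>M)"
  show ?thesis
  proof (cases "D = \<infinity>")
    case True
    then show ?thesis using coef_pos
      by (simp add: D_def[symmetric] ennreal_mult_top)
  next
    case False
    then have Dfin: "D < \<infinity>" by (simp add: top.not_eq_extremum)
    have xF[measurable]: "x t \<in> borel_measurable (F t)" by (rule x_meas)
    have vF[measurable]: "v t \<in> borel_measurable (F t)" by (rule v_meas)
    have uF[measurable]: "u \<in> borel_measurable (F t)" unfolding u_def by measurable
    define a2 where "a2 \<omega> = (norm (x t \<omega> - xstar))\<^sup>2" for \<omega>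
    define d2 where "d2 \<omega> = (norm (x t \<omega> - v t \<omega>))\<^sup>2" for \<omega>
    define u2 where "u2 \<omega> = (norm (u \<omega>))\<^sup>2" for \<omega>
    define n2 where "n2 \<omega> = (norm (n \<omega>))\<^sup>2" for \<omega>
    have [measurable]: "a2 \<in> borel_measurable M" "d2 \<in> borel_measurable M"
      "u2 \<in> borel_measurable M" "n2 \<in> borel_measurable M"
      unfolding a2_def d2_def u2_def n2_def by measurable
    have Da: "D = (\<integral>\<^sup>+ \<omega>. ennreal (a2 \<omega>) \<partial>M)" by (simp add: D_def a2_def)
    have int_a2: "integrable M a2"
      by (rule integrableI_nonneg) (use Dfin Da in \<open>auto simp: a2_def\<close>)
    have Ed: "(\<integral>\<^sup>+ \<omega>. ennreal (d2 \<omega>) \<partial>M) \<le> ennreal (\<alpha>\<^sup>2 * B\<^sup>2)"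
      using elastic[of t] by (simp add: d2_def)
    have int_d2: "integrable M d2"
      by (rule integrableI_nonneg) (use Ed in \<open>auto simp: d2_def intro: le_less_trans\<close>)
    have En: "(\<integral>\<^sup>+ \<omega>. ennreal (n2 \<omega>) \<partial>M) \<le> ennreal (\<sigma>\<^sup>2)"
    proof -
      have "(\<integral>\<^sup>+ \<omega>. ennreal (n2 \<omega>) \<partial>M)
          = (\<integral>\<^sup>+ \<omega>. nn_cond_exp M (F t) (\<lambda>\<omega>. ennreal (n2 \<omega>)) \<omega> \<partial>M)"
        using S.nn_cond_exp_intg[of "\<lambda>_. 1" "\<lambda>\<omega>. ennreal (n2 \<omega>)"] by simp
      also have "\<dots> \<le> (\<integral>\<^sup>+ \<omega>. ennreal (\<sigma>\<^sup>2) \<partial>M)"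
        by (rule nn_integral_mono_AE) (use variance[of t] in \<open>simp add: n2_def n_def\<close>)
      also have "\<dots> = ennreal (\<sigma>\<^sup>2)" by (simp add: emeasure_space_1)
      finally show ?thesis .
    qed
    have int_n2: "integrable M n2"
      by (rule integrableI_nonneg) (use En in \<open>auto simp: n2_def intro: le_less_trans\<close>)
    have ed: "(\<integral>\<^sup>+ \<omega>. ennreal (d2 \<omega>) \<partial>M) = ennreal (\<integral> \<omega>. d2 \<omega> \<partial>M)"
      by (rule nn_integral_eq_integral[OF int_d2]) (simp add: d2_def)
    have en: "(\<integral>\<^sup>+ \<omega>. ennreal (n2 \<omega>) \<partial>M) = ennreal (\<integral> \<omega>. n2 \<omega> \<partial>M)"
      by (rule nn_integral_eq_integral[OF int_n2]) (simp add: n2_def)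
    have Id: "(\<integral> \<omega>. d2 \<omega> \<partial>M) \<le> \<alpha>\<^sup>2 * B\<^sup>2"
      using Ed unfolding ed by simp
    have In: "(\<integral> \<omega>. n2 \<omega> \<partial>M) \<le> \<sigma>\<^sup>2"
      using En unfolding en by simp
    have pw: "u2 \<omega> \<le> (1 - \<alpha> * c / 2) * a2 \<omega> + K * d2 \<omega>" for \<omega>
      unfolding u2_def a2_def d2_def K_def u_def
      by (rule pointwise[OF grad lip L c_pos strong z alpha_pos aL])
    have int_u2: "integrable M u2"
    proof (rule Bochner_Integration.integrable_bound[where f="\<lambda>\<omega>. (1 - \<alpha> * c / 2) * a2 \<omega> + K * d2 \<omega>"])
      show "integrable M (\<lambda>\<omega>. (1 - \<alpha> * c / 2) * a2 \<omega> + K * d2 \<omega>)"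
        using int_a2 int_d2 by auto
      show "AE \<omega> in M. norm (u2 \<omega>) \<le> norm ((1 - \<alpha> * c / 2) * a2 \<omega> + K * d2 \<omega>)"
      proof (rule AE_I2)
        fix \<omega>
        show "norm (u2 \<omega>) \<le> norm ((1 - \<alpha> * c / 2) * a2 \<omega> + K * d2 \<omega>)"
          using pw[of \<omega>] abs_ge_self[of "(1 - \<alpha> * c / 2) * a2 \<omega> + K * d2 \<omega>"]
          by (simp add: u2_def)
      qed
    qed simp
    have int_g: "integrable M (\<lambda>\<omega>. f' (v t \<omega>))"
    proof (rule Bochner_Integration.integrable_bound[where f="\<lambda>\<omega>. (2 + a2 \<omega> + u2 \<omega>) / \<alpha>"])
      show "integrable M (\<lambda>\<omega>. (2 + a2 \<omega> + u2 \<omega>) / \<alpha>)"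
        using int_a2 int_u2 by auto
      show "AE \<omega> in M. norm (f' (v t \<omega>)) \<le> norm ((2 + a2 \<omega> + u2 \<omega>) / \<alpha>)"
      proof (rule AE_I2)
        fix \<omega>
        have e: "\<alpha> *\<^sub>R f' (v t \<omega>) = (x t \<omega> - xstar) - u \<omega>" by (simp add: u_def)
        have "\<alpha> * norm (f' (v t \<omega>)) = norm ((x t \<omega> - xstar) - u \<omega>)"
          using arg_cong[OF e, of norm] alpha_pos by simp
        also have "\<dots> \<le> norm (x t \<omega> - xstar) + norm (u \<omega>)" by (rule norm_triangle_ineq4)
        also have "\<dots> \<le> 2 + a2 \<omega> + u2 \<omega>"
        proof -
          have h1: "2 * norm (x t \<omega> - xstar) \<le> (norm (x t \<omega> - xstar))\<^sup>2 + 1"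
            using sum_squares_bound[of "norm (x t \<omega> - xstar)" 1] by simp
          have h2: "2 * norm (u \<omega>) \<le> (norm (u \<omega>))\<^sup>2 + 1"
            using sum_squares_bound[of "norm (u \<omega>)" 1] by simp
          show ?thesis unfolding a2_def u2_def
            using h1 h2 zero_le_power2[of "norm (x t \<omega> - xstar)"] zero_le_power2[of "norm (u \<omega>)"]
            by linarith
        qed
        finally show "norm (f' (v t \<omega>)) \<le> norm ((2 + a2 \<omega> + u2 \<omega>) / \<alpha>)"
          using alpha_pos by (simp add: field_simps a2_def u2_def)
      qed
    qed simp
    have zero_b: "(\<integral> \<omega>. (u \<omega> \<bullet> b) * (n \<omega> \<bullet> b) \<partial>M) = 0" if b: "b \<in> Basis" for b
    proof -
      have intub: "integrable M (\<lambda>\<omega>. (u \<omega> \<bullet> b) * (n \<omega> \<bullet> b))"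
      proof (rule Bochner_Integration.integrable_bound[where f="\<lambda>\<omega>. u2 \<omega> + n2 \<omega>"])
        show "integrable M (\<lambda>\<omega>. u2 \<omega> + n2 \<omega>)" using int_u2 int_n2 by auto
        show "AE \<omega> in M. norm ((u \<omega> \<bullet> b) * (n \<omega> \<bullet> b)) \<le> norm (u2 \<omega> + n2 \<omega>)"
          using abs_inner_basis_le[OF b] by (auto simp: u2_def n2_def)
      qed simp
      have gbI: "integrable M (\<lambda>\<omega>. f' (v t \<omega>) \<bullet> b)" using int_g by auto
      have GbI: "integrable M (\<lambda>\<omega>. G t \<omega> \<bullet> b)" using G_int by auto
      have gbF: "(\<lambda>\<omega>. f' (v t \<omega>) \<bullet> b) \<in> borel_measurable (F t)" by measurable
      have nb: "(\<lambda>\<omega>. n \<omega> \<bullet> b) = (\<lambda>\<omega>. G t \<omega> \<bullet> b - f' (v t \<omega>) \<bullet> b)"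
        by (simp add: fun_eq_iff n_def inner_diff_left)
      have ae0: "AE \<omega> in M. real_cond_exp M (F t) (\<lambda>\<omega>. n \<omega> \<bullet> b) \<omega> = 0"
        using S.real_cond_exp_diff[OF GbI gbI] S.real_cond_exp_F_meas[OF gbI gbF] unbiased[OF b, of t]
        unfolding nb by eventually_elim simp
      have "(\<integral> \<omega>. (u \<omega> \<bullet> b) * (n \<omega> \<bullet> b) \<partial>M)
          = (\<integral> \<omega>. (u \<omega> \<bullet> b) * real_cond_exp M (F t) (\<lambda>\<omega>. n \<omega> \<bullet> b) \<omega> \<partial>M)"
        by (rule S.real_cond_exp_intg(2)[symmetric]) (use intub in auto)
      also have "\<dots> = (\<integral> \<omega>. 0 \<partial>M)"
        by (rule integral_cong_AE) (use ae0 in auto)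
      finally show ?thesis by simp
    qed
    have un_int: "integrable M (\<lambda>\<omega>. u \<omega> \<bullet> n \<omega>)"
    proof (rule Bochner_Integration.integrable_bound[where f="\<lambda>\<omega>. u2 \<omega> + n2 \<omega>"])
      show "integrable M (\<lambda>\<omega>. u2 \<omega> + n2 \<omega>)" using int_u2 int_n2 by auto
      show "AE \<omega> in M. norm (u \<omega> \<bullet> n \<omega>) \<le> norm (u2 \<omega> + n2 \<omega>)"
        using abs_inner_le2 by (auto simp: u2_def n2_def)
    qed simp
    have un0: "(\<integral> \<omega>. u \<omega> \<bullet> n \<omega> \<partial>M) = 0"
    proof -
      have "(\<integral> \<omega>. u \<omega> \<bullet> n \<omega> \<partial>M) = (\<integral> \<omega>. (\<Sum>b\<in>Basis. (u \<omega> \<bullet> b) * (n \<omega> \<bullet> b)) \<partial>M)"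
        by (rule arg_cong[where f="integral\<^sup>L M"], rule ext, rule euclidean_inner)
      also have "\<dots> = (\<Sum>b\<in>Basis. (\<integral> \<omega>. (u \<omega> \<bullet> b) * (n \<omega> \<bullet> b) \<partial>M))"
      proof (rule Bochner_Integration.integral_sum)
        fix b :: "real^'n" assume b: "b \<in> Basis"
        show "integrable M (\<lambda>\<omega>. (u \<omega> \<bullet> b) * (n \<omega> \<bullet> b))"
        proof (rule Bochner_Integration.integrable_bound[where f="\<lambda>\<omega>. u2 \<omega> + n2 \<omega>"])
          show "integrable M (\<lambda>\<omega>. u2 \<omega> + n2 \<omega>)" using int_u2 int_n2 by auto
          show "AE \<omega> in M. norm ((u \<omega> \<bullet> b) * (n \<omega> \<bullet> b)) \<le> norm (u2 \<omega> + n2 \<omega>)"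
            using abs_inner_basis_le[OF b] by (auto simp: u2_def n2_def)
        qed simp
      qed
      also have "\<dots> = 0" using zero_b by simp
      finally show ?thesis .
    qed
    define \<psi> where "\<psi> \<omega> = u2 \<omega> - 2 * \<alpha> * (u \<omega> \<bullet> n \<omega>) + \<alpha>\<^sup>2 * n2 \<omega>" for \<omega>
    have psi_eq: "(norm (x (Suc t) \<omega> - xstar))\<^sup>2 = \<psi> \<omega>" if "\<omega> \<in> space M" for \<omega>
    proof -
      have "x (Suc t) \<omega> - xstar = u \<omega> - \<alpha> *\<^sub>R n \<omega>"
        using update[OF that, of t] by (simp add: u_def n_def algebra_simps)
      moreover have "(norm (u \<omega> - \<alpha> *\<^sub>R n \<omega>))\<^sup>2
          = (norm (u \<omega>))\<^sup>2 - 2 * \<alpha> * (u \<omega> \<bullet> n \<omega>) + \<alpha>\<^sup>2 * (norm (n \<omega>))\<^sup>2"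
        by (simp only: power2_norm_eq_inner)
          (simp add: inner_diff_left inner_diff_right inner_commute power2_eq_square algebra_simps)
      ultimately show ?thesis unfolding \<psi>_def u2_def n2_def by simp
    qed
    have psi_int: "integrable M \<psi>" unfolding \<psi>_def using int_u2 un_int int_n2 by auto
    have psi_nn: "\<psi> \<omega> \<ge> 0" if "\<omega> \<in> space M" for \<omega> using psi_eq[OF that] by (metis zero_le_power2)
    have Ipsi: "(\<integral> \<omega>. \<psi> \<omega> \<partial>M) = (\<integral> \<omega>. u2 \<omega> \<partial>M) + \<alpha>\<^sup>2 * (\<integral> \<omega>. n2 \<omega> \<partial>M)"
      unfolding \<psi>_def using int_u2 un_int int_n2 un0 by simp
    have Iu: "(\<integral> \<omega>. u2 \<omega> \<partial>M) \<le> (1 - \<alpha> * c / 2) * (\<integral> \<omega>. a2 \<omega> \<partial>M) + K * (\<integral> \<omega>. d2 \<omega> \<partial>M)"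
    proof -
      have "(\<integral> \<omega>. u2 \<omega> \<partial>M) \<le> (\<integral> \<omega>. (1 - \<alpha> * c / 2) * a2 \<omega> + K * d2 \<omega> \<partial>M)"
        by (rule integral_mono) (use int_u2 int_a2 int_d2 pw in auto)
      also have "\<dots> = (1 - \<alpha> * c / 2) * (\<integral> \<omega>. a2 \<omega> \<partial>M) + K * (\<integral> \<omega>. d2 \<omega> \<partial>M)"
        using int_a2 int_d2 by simp
      finally show ?thesis .
    qed
    have K0: "K \<ge> 0" using c_pos alpha_pos unfolding K_def by simp
    have a2nn: "(\<integral> \<omega>. a2 \<omega> \<partial>M) \<ge> 0" by (rule integral_nonneg_AE) (auto simp: a2_def)
    have Ipsi2: "(\<integral> \<omega>. \<psi> \<omega> \<partial>M) \<le> (1 - \<alpha> * c / 2) * (\<integral> \<omega>. a2 \<omega> \<partial>M)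
        + (2 * \<alpha>^3 * B\<^sup>2 * L\<^sup>2 / c + 3 * \<alpha>\<^sup>2 * \<sigma>\<^sup>2 + 3 * \<alpha>^4 * L\<^sup>2 * B\<^sup>2)"
    proof -
      have "K * (\<integral> \<omega>. d2 \<omega> \<partial>M) \<le> K * (\<alpha>\<^sup>2 * B\<^sup>2)" using Id K0 by (rule mult_left_mono)
      moreover have "\<alpha>\<^sup>2 * (\<integral> \<omega>. n2 \<omega> \<partial>M) \<le> \<alpha>\<^sup>2 * \<sigma>\<^sup>2" using In by (intro mult_left_mono) auto
      moreover have "K * (\<alpha>\<^sup>2 * B\<^sup>2) = 2 * \<alpha>^3 * B\<^sup>2 * L\<^sup>2 / c + 3 * \<alpha>^4 * L\<^sup>2 * B\<^sup>2"
        unfolding K_def using c_pos by (simp add: field_simps power2_eq_square power3_eq_cube power4_eq_xxxx)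
      moreover have "\<alpha>\<^sup>2 * \<sigma>\<^sup>2 \<le> 3 * \<alpha>\<^sup>2 * \<sigma>\<^sup>2" by simp
      ultimately show ?thesis using Ipsi Iu by linarith
    qed
    have "(\<integral>\<^sup>+ \<omega>. ennreal ((norm (x (Suc t) \<omega> - xstar))\<^sup>2) \<partial>M) = (\<integral>\<^sup>+ \<omega>. ennreal (\<psi> \<omega>) \<partial>M)"
      by (rule nn_integral_cong) (simp add: psi_eq)
    also have "\<dots> = ennreal (\<integral> \<omega>. \<psi> \<omega> \<partial>M)"
      by (rule nn_integral_eq_integral[OF psi_int]) (use psi_nn in auto)
    also have "\<dots> \<le> ennreal ((1 - \<alpha> * c / 2) * (\<integral> \<omega>. a2 \<omega> \<partial>M)
        + (2 * \<alpha>^3 * B\<^sup>2 * L\<^sup>2 / c + 3 * \<alpha>\<^sup>2 * \<sigma>\<^sup>2 + 3 * \<alpha>^4 * L\<^sup>2 * B\<^sup>2))"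
      using Ipsi2 by (rule ennreal_leI)
    also have "\<dots> = ennreal (1 - \<alpha> * c / 2) * ennreal (\<integral> \<omega>. a2 \<omega> \<partial>M)
        + ennreal (2 * \<alpha>^3 * B\<^sup>2 * L\<^sup>2 / c + 3 * \<alpha>\<^sup>2 * \<sigma>\<^sup>2 + 3 * \<alpha>^4 * L\<^sup>2 * B\<^sup>2)"
      using coef_pos a2nn alpha_pos c_pos by (simp add: ennreal_plus ennreal_mult)
    also have "ennreal (\<integral> \<omega>. a2 \<omega> \<partial>M) = D"
      unfolding Da by (rule nn_integral_eq_integral[OF int_a2, symmetric]) (auto simp: a2_def)
    finally show ?thesis by (simp add: D_def)
  qed
qed

end
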